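(* Let $n\in\mathbb Z_{>0}$ and let $B$ be a (closed, filled) convex $n$-sided polygon in $D$ with vertices $A_1,\ldots,A_n$ in counterclockwise order; set $A_{n+1}=A_1$. For $1\leq i\leq n$ let $u_i,v_i\in S^1$ be the intersections of the line $A_iA_{i+1}$ with $S^1$, with $u_i$ closer to $A_i$ than to $A_{i+1}$; set $u_{n+1}=u_1$. Then for $1\leq i\leq n$: (1) if $v\in arc[u_i,u_{i+1})$, then $\psi_B(v)=\psi_{A_{i+1}}(v)$; (2) if $v\in arc(u_i,u_{i+1})$, then $\psi_B'(v)=\dfrac{|A_{i+1}\psi_{A_{i+1}}(v)|}{|vA_{i+1}|}$; (3) $\psi_{B+}'(u_i)=\dfrac{|A_{i+1}\psi_{A_{i+1}}(u_i)|}{|u_iA_{i+1}|}$ and $\psi_{B-}'(u_i)=\dfrac{|A_i\psi_{A_i}(u_i)|}{|u_iA_i|}$.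
   Context: $D$ is the open unit disk in $\mathbb R^2$, $S^1$ its boundary circle identified with $\mathbb R/\mathbb Z$ via the counterclockwise normalized angle, $\pi:\mathbb R\to S^1$ the projection. For a closed convex $U\subset D$ and $v\in S^1$, $\psi_U(v)$ is the point $w\in S^1\setminus\{v\}$ such that the line $vw$ meets $U$ and $U$ lies in the closed half-plane to the left of the directed line from $v$ to $w$; for a point $P\in D$, $\psi_P(v)$ is the second intersection point of the line $vP$ with $S^1$. For a homeomorphism $g$ of $S^1$ with lift $\overline g$ ($\overline g(0)\in[0,1)$) and $x\in S^1$, $g'(x)$, $g'_+(x)$, $g'_-(x)$ denote $\overline g'(u)$, the right derivative $\overline g'_+(u)$, the left derivative $\overline g'_-(u)$ for $u\in\pi^{-1}(x)$. $|XY|$ is Euclidean distance. For $w_1,w_2\in S^1$, $arc[w_1,w_2)$ is the counterclockwise arc from $w_1$ to $w_2$ including $w_1$ and excluding $w_2$; $arc(w_1,w_2)$ excludes both endpoints. *)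

theory Defs
  imports "HOL-Analysis.Analysis"
begin

text \<open>The plane is modelled by the complex numbers; the unit circle S^1 is
  the set of unit-modulus complex numbers, identified with R/Z through the
  projection below (counterclockwise normalized angle).\<close>

definition circ_proj :: "real \<Rightarrow> complex" where
  "circ_proj t = cis (2 * pi * t)"

definition on_circle :: "complex \<Rightarrow> bool" where
  "on_circle w \<longleftrightarrow> cmod w = 1"

definition left_of :: "complex \<Rightarrow> complex \<Rightarrow> complex \<Rightarrow> bool" where
  "left_of v w p \<longleftrightarrow> Im (cnj (w - v) * (p - v)) \<ge> 0"

definition on_line :: "complex \<Rightarrow> complex \<Rightarrow> complex \<Rightarrow> bool" where
  "on_line v w p \<longleftrightarrow> (\<exists>t::real. p = v + complex_of_real t * (w - v))"

definition psi_set :: "complex set \<Rightarrow> complex \<Rightarrow> complex" where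
  "psi_set U v = (THE w. on_circle w \<and> w \<noteq> v \<and> (\<exists>p\<in>U. on_line v w p)
                          \<and> (\<forall>p\<in>U. left_of v w p))"

definition psi_pt :: "complex \<Rightarrow> complex \<Rightarrow> complex" where
  "psi_pt P v = (THE w. on_circle w \<and> w \<noteq> v \<and> on_line v w P)"

definition circle_lift :: "(complex \<Rightarrow> complex) \<Rightarrow> real \<Rightarrow> real" where
  "circle_lift g = (THE G. continuous_on UNIV G \<and> (\<forall>t. circ_proj (G t) = g (circ_proj t))
                          \<and> 0 \<le> G 0 \<and> G 0 < 1)"

definition arc_co :: "complex \<Rightarrow> complex \<Rightarrow> complex set" where
  "arc_co w1 w2 = {circ_proj x | x. \<exists>a b. circ_proj a = w1 \<and> circ_proj b = w2 \<and>
                        a < b \<and> b \<le> a + 1 \<and> a \<le> x \<and> x < b}"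

definition arc_oo :: "complex \<Rightarrow> complex \<Rightarrow> complex set" where
  "arc_oo w1 w2 = {circ_proj x | x. \<exists>a b. circ_proj a = w1 \<and> circ_proj b = w2 \<and>
                        a < b \<and> b \<le> a + 1 \<and> a < x \<and> x < b}"

definition line_circle_near :: "complex \<Rightarrow> complex \<Rightarrow> complex" where
  "line_circle_near P Q = (THE u. on_circle u \<and> on_line P Q u \<and> cmod (u - P) < cmod (u - Q))"

text \<open>Vertices A 0, ..., A (n-1) (indices mod n) form a convex n-gon in
  counterclockwise order: every other vertex is strictly left of each directed edge.\<close>
definition ccw_convex_polygon :: "nat \<Rightarrow> (nat \<Rightarrow> complex) \<Rightarrow> bool" where
  "ccw_convex_polygon n A \<longleftrightarrow> 3 \<le> n \<and>
     (\<forall>i<n. \<forall>j<n. j \<noteq> i \<and> j \<noteq> Suc i mod n \<longrightarrow>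
        Im (cnj (A (Suc i mod n) - A i) * (A j - A i)) > 0)"

end

theory Submission
  imports Defs
begin


definition mob :: "complex \<Rightarrow> complex \<Rightarrow> complex" where
  "mob P v = (P - v) / (1 - cnj P * v)"

definition cr :: "complex \<Rightarrow> complex \<Rightarrow> real" where
  "cr a b = Im (cnj a * b)"

lemma cr_alt: "cr a b = Re a * Im b - Im a * Re b"
  by (simp add: cr_def)

lemma unit_re_im: "cmod v = 1 \<Longrightarrow> (Re v)^2 + (Im v)^2 = 1"
  by (metis cmod_power2 one_power2)

lemma disk_re_im: "cmod v < 1 \<Longrightarrow> (Re v)^2 + (Im v)^2 < 1"
  by (metis cmod_power2 norm_ge_zero power_less_one_iff one_power2 power_strict_mono zero_less_numeral pos2)

lemma denom_nz: assumes "cmod v = 1" "cmod P < 1" shows "1 - cnj P * v \<noteq> 0"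
proof
  assume "1 - cnj P * v = 0"
  then have "cmod (cnj P * v) = 1" by (metis eq_iff_diff_eq_0 norm_one)
  then show False using assms by (simp add: norm_mult)
qed

lemma mob_eq_aux:
  fixes P v :: complex
  assumes "cmod v = 1"
  defines "D \<equiv> (cmod (P - v))^2" and "N \<equiv> 2*(1 - Re (cnj v * P))"
  shows "(P - v) * of_real D = (of_real D * v + of_real N * (P - v)) * (1 - cnj P * v)"
proof -
  have h: "(Re v)^2 + (Im v)^2 = 1" using unit_re_im assms(1) by blast
  show ?thesis
  unfolding D_def N_def cmod_power2
  apply (simp add: complex_eq_iff algebra_simps power2_eq_square)
  apply (intro conjI)
  using h unfolding power2_eq_square by algebra+
qed

lemma mob_props:
  fixes P v :: complex
  assumes v: "cmod v = 1" and P: "cmod P < 1"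
  defines "s \<equiv> 2*(1 - Re (cnj v * P)) / (cmod (P - v))^2"
  shows "1 < s" "mob P v = v + of_real s * (P - v)" "cmod (mob P v) = 1" "mob P v \<noteq> v"
    "P \<noteq> v"
proof -
  have h: "(Re v)^2 + (Im v)^2 = 1" using unit_re_im v by blast
  have hP: "(Re P)^2 + (Im P)^2 < 1" using disk_re_im P by blast
  show Pv: "P \<noteq> v" using v P by auto
  have D: "(cmod (P - v))^2 > 0" using Pv by simp
  have DD: "(cmod (P - v))^2 = (Re P)^2 + (Im P)^2 - 2 * Re (cnj v * P) + 1"
    unfolding cmod_power2 using h by (simp add: power2_eq_square algebra_simps)
  show s1: "1 < s" unfolding s_def using D DD hP by (subst less_divide_eq_1_pos) auto
  have dn: "1 - cnj P * v \<noteq> 0" using denom_nz v P by blast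
  have e: "(P - v) * of_real ((cmod (P - v))^2) = (of_real ((cmod (P - v))^2) * v + of_real (2*(1 - Re (cnj v * P))) * (P - v)) * (1 - cnj P * v)"
    using mob_eq_aux[OF v] by blast
  have "v + of_real s * (P - v) = (of_real ((cmod (P - v))^2) * v + of_real (2*(1 - Re (cnj v * P))) * (P - v)) / of_real ((cmod (P - v))^2)"
    unfolding s_def using D by (simp add: field_simps)
  also have "\<dots> = (P - v) / (1 - cnj P * v)"
    using e D dn by (simp add: field_simps)
  finally show ms: "mob P v = v + of_real s * (P - v)" unfolding mob_def by simp
  have n1: "cmod (1 - cnj P * v) = cmod (P - v)"
  proof -
    have "(cmod (1 - cnj P * v))^2 = (cmod (P - v))^2"
      unfolding cmod_power2 using h apply (simp add: power2_eq_square algebra_simps)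
      unfolding power2_eq_square by algebra
    then show ?thesis by (simp add: power2_eq_iff_nonneg)
  qed
  show "cmod (mob P v) = 1" unfolding mob_def using n1 Pv by (simp add: norm_divide)
  show "mob P v \<noteq> v" using ms s1 Pv by simp
qed

lemma norm_line_sq:
  fixes v d :: complex and r :: real
  assumes "cmod v = 1"
  shows "(cmod (v + of_real r * d))^2 = 1 + r * (2 * Re (cnj v * d) + r * (cmod d)^2)"
proof -
  have h: "(Re v)^2 + (Im v)^2 = 1" using unit_re_im assms by blast
  show ?thesis unfolding cmod_power2 using h
    by (simp add: power2_eq_square algebra_simps)
qed

lemma line_circle_roots:
  fixes v d :: complex and r :: real
  assumes "cmod v = 1" "d \<noteq> 0" "cmod (v + of_real r * d) = 1"
  shows "r = 0 \<or> r = - 2 * Re (cnj v * d) / (cmod d)^2"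
proof -
  have "r * (2 * Re (cnj v * d) + r * (cmod d)^2) = 0"
    using norm_line_sq[OF assms(1), of r d] assms(3) by simp
  then have "r = 0 \<or> 2 * Re (cnj v * d) + r * (cmod d)^2 = 0" by simp
  then show ?thesis using assms(2) by (auto simp: field_simps)
qed

lemma psi_pt_eq:
  assumes v: "cmod v = 1" and P: "cmod P < 1"
  shows "psi_pt P v = mob P v"
  unfolding psi_pt_def
proof (rule the_equality)
  define s where "s = 2*(1 - Re (cnj v * P)) / (cmod (P - v))^2"
  note mp = mob_props[OF v P, folded s_def]
  show "on_circle (mob P v) \<and> mob P v \<noteq> v \<and> on_line v (mob P v) P"
    unfolding on_circle_def on_line_def
  proof (intro conjI)
    show "\<exists>t. P = v + complex_of_real t * (mob P v - v)"
      by (rule exI[of _ "1/s"]) (use mp(1,2) in \<open>simp add: field_simps\<close>)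
  qed (use mp in auto)
  fix w assume w: "on_circle w \<and> w \<noteq> v \<and> on_line v w P"
  then obtain t where t: "P = v + of_real t * (w - v)" "cmod w = 1"
    unfolding on_line_def on_circle_def by auto
  have t0: "t \<noteq> 0" using t mp(5) by auto
  have wv: "w = v + of_real (1/t) * (P - v)" using t t0 by (simp add: field_simps)
  have dn: "P - v \<noteq> 0" using mp(5) by simp
  from line_circle_roots[OF v dn, of "1/t"] wv t(2)
  have "1/t = 0 \<or> 1/t = - 2 * Re (cnj v * (P - v)) / (cmod (P - v))^2" by simp
  moreover have "Re (cnj v * (P - v)) = Re (cnj v * P) - 1"
    using unit_re_im[OF v] by (simp add: algebra_simps power2_eq_square)
  ultimately have "1/t = s" using t0 unfolding s_def by (auto simp: algebra_simps)
  then show "w = mob P v" using wv mp(2) by simp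
qed

lemma cr_swap: "cr a b = - cr b a"
  by (simp add: cr_alt)

lemma cr_scale_left: "cr (of_real r * a) b = r * cr a b"
  by (simp add: cr_alt algebra_simps)

lemma cr_scale_right: "cr a (of_real r * b) = r * cr a b"
  by (simp add: cr_alt algebra_simps)

lemma cr_self: "cr a a = 0"
  by (simp add: cr_alt)

lemma cr_add_right: "cr a (b + c) = cr a b + cr a c"
  by (simp add: cr_alt algebra_simps)

lemma cr_diff_right: "cr a (b - c) = cr a b - cr a c"
  by (simp add: cr_alt algebra_simps)

lemma cr_add_left: "cr (b + c) a = cr b a + cr c a"
  by (simp add: cr_alt algebra_simps)

lemma cr_diff_left: "cr (b - c) a = cr b a - cr c a"
  by (simp add: cr_alt algebra_simps)

lemma cr_zero_parallel:
  assumes "cr d e = 0" "d \<noteq> 0"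
  shows "e = of_real (Re (cnj d * e) / (cmod d)^2) * d"
proof -
  have D: "(cmod d)^2 > 0" using assms(2) by simp
  have h: "Re d * Im e = Im d * Re e" using assms(1) by (simp add: cr_alt)
  have "of_real ((cmod d)^2) * e = of_real (Re (cnj d * e)) * d"
    unfolding cmod_power2 using h
    by (simp add: complex_eq_iff algebra_simps power2_eq_square)
  then show ?thesis using D
    by (simp add: field_simps)
qed

lemma left_of_cr: "left_of v w p \<longleftrightarrow> cr (w - v) (p - v) \<ge> 0"
  by (simp add: left_of_def cr_def)

lemma chord_param_pos:
  fixes v w p :: complex
  assumes v: "cmod v = 1" and w: "cmod w = 1" and wv: "w \<noteq> v"
    and p: "cmod p < 1" and pl: "p = v + of_real t * (w - v)"
  shows "0 < t" "t < 1"
proof -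
  have d: "w - v \<noteq> 0" using wv by simp
  have w1: "(cmod (v + of_real 1 * (w - v)))^2 = 1" using w by simp
  have e1: "2 * Re (cnj v * (w - v)) = -((cmod (w - v))^2)"
    using norm_line_sq[OF v, of 1 "w - v"] w1 by simp
  have "(cmod p)^2 < 1" using p by (simp add: power_less_one_iff abs_square_less_1)
  moreover have "(cmod p)^2 = 1 + t * (2 * Re (cnj v * (w - v)) + t * (cmod (w - v))^2)"
    unfolding pl by (rule norm_line_sq[OF v])
  moreover have "1 + t * (2 * Re (cnj v * (w - v)) + t * (cmod (w - v))^2) = 1 + t * (t - 1) * (cmod (w - v))^2"
    unfolding e1 by (simp add: algebra_simps)
  ultimately have "t * (t - 1) * (cmod (w - v))^2 < 0" by linarith
  moreover have "(cmod (w - v))^2 > 0" using d by simp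
  ultimately have "t * (t - 1) < 0" by (simp add: mult_less_0_iff)
  then show "0 < t" "t < 1" by (auto simp: mult_less_0_iff)
qed

lemma psi_set_eqI:
  assumes B: "B \<subseteq> ball 0 1" and v: "cmod v = 1" and w: "cmod w = 1" and wv: "w \<noteq> v"
    and p0: "p0 \<in> B" "on_line v w p0" and all: "\<forall>p\<in>B. left_of v w p"
  shows "psi_set B v = w"
  unfolding psi_set_def
proof (rule the_equality)
  show "on_circle w \<and> w \<noteq> v \<and> (\<exists>p\<in>B. on_line v w p) \<and> (\<forall>p\<in>B. left_of v w p)"
    using assms unfolding on_circle_def by blast
  fix w' assume h: "on_circle w' \<and> w' \<noteq> v \<and> (\<exists>p\<in>B. on_line v w' p) \<and> (\<forall>p\<in>B. left_of v w' p)"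
  then obtain p1 t1 where p1: "p1 \<in> B" "p1 = v + of_real t1 * (w' - v)" and w': "cmod w' = 1" "w' \<noteq> v"
    unfolding on_line_def on_circle_def by blast
  obtain t0 where t0: "p0 = v + of_real t0 * (w - v)" using p0 unfolding on_line_def by blast
  have p0d: "cmod p0 < 1" using B p0 by auto
  have p1d: "cmod p1 < 1" using B p1 by auto
  have t0p: "0 < t0" using chord_param_pos[OF v w wv p0d t0] by simp
  have t1p: "0 < t1" using chord_param_pos[OF v w'(1) w'(2) p1d p1(2)] by simp
  have a: "cr (w' - v) (p0 - v) \<ge> 0" using h p0 by (simp add: left_of_cr)
  have b: "cr (w - v) (p1 - v) \<ge> 0" using all p1(1) by (simp add: left_of_cr)
  have a': "t0 * cr (w' - v) (w - v) \<ge> 0" using a t0 by (simp add: cr_scale_right)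
  have b': "t1 * cr (w - v) (w' - v) \<ge> 0" using b unfolding p1(2) by (simp add: cr_scale_right)
  have "cr (w - v) (w' - v) = 0"
    using a' b' t0p t1p cr_swap[of "w - v" "w' - v"]
    by (smt (verit) zero_le_mult_iff)
  then have par0: "w' - v = of_real (Re (cnj (w - v) * (w' - v)) / (cmod (w - v))^2) * (w - v)"
    by (rule cr_zero_parallel) (use wv in simp)
  define l where "l = Re (cnj (w - v) * (w' - v)) / (cmod (w - v))^2"
  have par: "w' = v + of_real l * (w - v)" using par0 unfolding l_def[symmetric] by (simp add: algebra_simps)
  have d: "w - v \<noteq> 0" using wv by simp
  have "cmod (v + of_real l * (w - v)) = 1" using par w' by simp
  from line_circle_roots[OF v d this] have l: "l = 0 \<or> l = - 2 * Re (cnj v * (w - v)) / (cmod (w - v))^2" .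
  have "cmod (v + of_real 1 * (w - v)) = 1" using w by simp
  from line_circle_roots[OF v d this] have "(1::real) = 0 \<or> 1 = - 2 * Re (cnj v * (w - v)) / (cmod (w - v))^2" .
  then have "1 = - 2 * Re (cnj v * (w - v)) / (cmod (w - v))^2" by (meson one_neq_zero)
  with l have "l = 0 \<or> l = 1" by metis
  moreover have "l \<noteq> 0" using par w' by auto
  ultimately have "l = 1" by simp
  then show "w' = w" using par by simp
qed

lemma cr_rot: "cr (c * a) (c * b) = (cmod c)^2 * cr a b"
  unfolding cmod_power2 by (simp add: cr_alt algebra_simps power2_eq_square)

lemma convex_left_halfplane: "convex {p. cr d (p - v) \<ge> 0}"
proof (rule convexI)
  fix x y :: complex and u t :: real
  assume x: "x \<in> {p. cr d (p - v) \<ge> 0}" and y: "y \<in> {p. cr d (p - v) \<ge> 0}"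
    and u: "0 \<le> u" and t: "0 \<le> t" and ut: "u + t = 1"
  have "u *\<^sub>R x + t *\<^sub>R y - v = of_real u * (x - v) + of_real t * (y - v)"
    using ut by (simp add: scaleR_conv_of_real algebra_simps) (metis add_diff_cancel_left' mult.right_neutral of_real_1 of_real_add ring_class.ring_distribs(1))
  then have "cr d (u *\<^sub>R x + t *\<^sub>R y - v) = u * cr d (x - v) + t * cr d (y - v)"
    by (simp add: cr_add_right cr_scale_right)
  then show "u *\<^sub>R x + t *\<^sub>R y \<in> {p. cr d (p - v) \<ge> 0}"
    using x y u t by simp
qed

lemma hull_in_ball:
  fixes n :: nat and A :: "nat \<Rightarrow> complex"
  assumes "\<forall>k<n. cmod (A k) < 1"
  shows "convex hull (A ` {..<n}) \<subseteq> ball 0 1"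
  by (rule hull_minimal) (use assms in auto)

lemma psi_set_vertex:
  fixes n :: nat and A :: "nat \<Rightarrow> complex"
  assumes B: "B = convex hull (A ` {..<n})" and inD: "\<forall>k<n. cmod (A k) < 1"
    and v: "cmod v = 1" and j: "j < n" and cond: "\<forall>k<n. cr (A j - v) (A k - v) \<ge> 0"
  shows "psi_set B v = mob (A j) v"
proof -
  have P: "cmod (A j) < 1" using inD j by blast
  define s where "s = 2*(1 - Re (cnj v * A j)) / (cmod (A j - v))^2"
  note mp = mob_props[OF v P, folded s_def]
  define w where "w = mob (A j) v"
  show ?thesis unfolding w_def[symmetric]
  proof (rule psi_set_eqI)
    show "B \<subseteq> ball 0 1" using hull_in_ball[OF inD] B by simp
    show "cmod v = 1" by fact
    show "cmod w = 1" "w \<noteq> v" using mp w_def by auto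
    show "A j \<in> B" using B j by (simp add: hull_inc)
    show "on_line v w (A j)" unfolding on_line_def
      by (rule exI[of _ "1/s"]) (use mp(1,2) in \<open>simp add: w_def field_simps\<close>)
    have "A ` {..<n} \<subseteq> {p. cr (w - v) (p - v) \<ge> 0}"
    proof
      fix p assume "p \<in> A ` {..<n}"
      then obtain k where k: "k < n" "p = A k" by auto
      have "w - v = of_real s * (A j - v)" using mp(2) w_def by simp
      then have "cr (w - v) (p - v) = s * cr (A j - v) (A k - v)" using k by (simp add: cr_scale_left)
      then show "p \<in> {p. cr (w - v) (p - v) \<ge> 0}" using cond k mp(1) by simp
    qed
    then have "B \<subseteq> {p. cr (w - v) (p - v) \<ge> 0}"
      unfolding B by (rule hull_minimal) (rule convex_left_halfplane)
    then show "\<forall>p\<in>B. left_of v w p" by (auto simp: left_of_cr)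
  qed
qed

lemma vertex_exists:
  fixes n :: nat and A :: "nat \<Rightarrow> complex"
  assumes n: "0 < n" and inD: "\<forall>k<n. cmod (A k) < 1" and v: "cmod v = 1"
  shows "\<exists>j<n. \<forall>k<n. cr (A j - v) (A k - v) \<ge> 0"
proof -
  define z where "z k = - cnj v * (A k - v)" for k
  have vv: "cnj v * v = 1" using unit_re_im[OF v]
    by (simp add: complex_eq_iff power2_eq_square algebra_simps)
  have re: "Re (z k) > 0" if "k < n" for k
  proof -
    have "Re (cnj v * A k) \<le> cmod (cnj v * A k)" by (rule complex_Re_le_cmod)
    also have "\<dots> < 1" using inD that v by (simp add: norm_mult)
    finally show ?thesis unfolding z_def using vv by (simp add: algebra_simps)
  qed
  define f where "f k = Im (z k) / Re (z k)" for k
  define m where "m = Min (f ` {..<n})"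
  have "m \<in> f ` {..<n}" unfolding m_def using n by (intro Min_in) auto
  then obtain j where j: "j < n" "f j = m" by auto
  have le: "f j \<le> f k" if "k < n" for k using j that unfolding m_def by (simp add: Min_le)
  show ?thesis
  proof (intro exI conjI allI impI)
    show "j < n" by fact
    fix k assume k: "k < n"
    have c1: "cmod (- cnj v) = 1" using v by simp
    have "cr (z j) (z k) = cr (A j - v) (A k - v)"
      unfolding z_def cr_rot c1 by simp
    moreover have "cr (z j) (z k) = Re (z j) * Re (z k) * (f k - f j)"
      unfolding f_def cr_alt using re[OF j(1)] re[OF k] by (simp add: field_simps)
    moreover have "Re (z j) * Re (z k) * (f k - f j) \<ge> 0"
      using re[OF j(1)] re[OF k] le[OF k] by simp
    ultimately show "cr (A j - v) (A k - v) \<ge> 0" by simp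
  qed
qed

lemma mob_tendsto:
  assumes "cmod v0 = 1" "cmod P < 1"
  shows "(mob P \<longlongrightarrow> mob P v0) (at v0 within S)"
proof -
  have "((\<lambda>v. (P - v) / (1 - cnj P * v)) \<longlongrightarrow> (P - v0) / (1 - cnj P * v0)) (at v0 within S)"
    by (intro tendsto_intros) (use denom_nz[OF assms] in auto)
  then show ?thesis unfolding mob_def .
qed

lemma cr_tendsto:
  "((\<lambda>v. cr (a - v) (b - v)) \<longlongrightarrow> cr (a - v0) (b - v0)) (at v0 within S)"
  unfolding cr_alt by (intro tendsto_intros)

lemma psi_set_cont:
  fixes n :: nat and A :: "nat \<Rightarrow> complex"
  assumes B: "B = convex hull (A ` {..<n})" and inD: "\<forall>k<n. cmod (A k) < 1" and n: "0 < n"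
  shows "continuous_on (sphere 0 1) (psi_set B)"
  unfolding continuous_on_def
proof (intro ballI)
  fix v0 :: complex assume v0s: "v0 \<in> sphere 0 1"
  then have v0: "cmod v0 = 1" by simp
  define J where "J v = {k. k < n \<and> (\<forall>m<n. cr (A k - v) (A m - v) \<ge> 0)}" for v
  show "(psi_set B \<longlongrightarrow> psi_set B v0) (at v0 within sphere 0 1)"
  proof (rule tendstoI)
    fix e :: real assume e: "0 < e"
    have ev1: "eventually (\<lambda>v. (k \<in> J v \<longrightarrow> k \<in> J v0) \<and> (k \<in> J v0 \<longrightarrow> dist (mob (A k) v) (mob (A k) v0) < e)) (at v0 within sphere 0 1)"
      if k: "k \<in> {..<n}" for k
    proof (cases "k \<in> J v0")
      case True
      have "cmod (A k) < 1" using inD k by auto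
      from tendstoD[OF mob_tendsto[OF v0 this] e] show ?thesis
        by (rule eventually_mono) (use True in auto)
    next
      case False
      then obtain m where m: "m < n" "cr (A k - v0) (A m - v0) < 0" using k unfolding J_def by force
      from order_tendstoD(2)[OF cr_tendsto m(2)]
      have "eventually (\<lambda>v. cr (A k - v) (A m - v) < 0) (at v0 within sphere 0 1)" .
      then show ?thesis
        by (rule eventually_mono) (use False m in \<open>auto simp: J_def\<close>)
    qed
    have ev2: "eventually (\<lambda>v. \<forall>k\<in>{..<n}. (k \<in> J v \<longrightarrow> k \<in> J v0) \<and> (k \<in> J v0 \<longrightarrow> dist (mob (A k) v) (mob (A k) v0) < e)) (at v0 within sphere 0 1)"
      by (rule eventually_ball_finite) (use ev1 in auto)
    have ev3: "eventually (\<lambda>v. v \<in> ball v0 1 \<and> v \<in> sphere 0 1) (at v0 within sphere 0 1)"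
      by (rule eventually_at_ball) simp
    show "eventually (\<lambda>v. dist (psi_set B v) (psi_set B v0) < e) (at v0 within sphere 0 1)"
      using ev2 ev3
    proof eventually_elim
      case (elim v)
      then have v: "cmod v = 1" by simp
      obtain j where j: "j < n" "\<forall>k<n. cr (A j - v) (A k - v) \<ge> 0"
        using vertex_exists[OF n inD v] by blast
      have jJ: "j \<in> J v" using j unfolding J_def by auto
      then have jJ0: "j \<in> J v0" using elim j by auto
      have "psi_set B v = mob (A j) v" by (rule psi_set_vertex[OF B inD v j(1) j(2)])
      moreover have "psi_set B v0 = mob (A j) v0"
        by (rule psi_set_vertex[OF B inD v0 j(1)]) (use jJ0 in \<open>auto simp: J_def\<close>)
      ultimately show ?case using elim j jJ0 by auto
    qed
  qed
qed

lemma cis_eq_1_int: assumes "cis x = 1" shows "\<exists>k::int. x = 2 * pi * k"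
proof -
  have "exp (\<i> * complex_of_real x) = 1" using assms by (simp add: cis_conv_exp)
  then obtain k :: int where "x = of_int (2 * k) * pi" by (auto simp: exp_eq_1)
  then show ?thesis by (intro exI[of _ k]) simp
qed

lemma circ_proj_eq_iff: "circ_proj x = circ_proj y \<longleftrightarrow> (\<exists>k::int. x = y + k)"
proof
  assume "circ_proj x = circ_proj y"
  then have "cis (2*pi*x) * cis (- (2*pi*y)) = 1" unfolding circ_proj_def
    by (simp add: cis_mult)
  then have "cis (2*pi*(x - y)) = 1" by (simp add: cis_mult algebra_simps)
  then obtain k :: int where "2*pi*(x-y) = 2*pi*k" using cis_eq_1_int by blast
  then show "\<exists>k::int. x = y + k" by (intro exI[of _ k]) simp
next
  assume "\<exists>k::int. x = y + k"
  then obtain k :: int where "x = y + k" by blast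
  then show "circ_proj x = circ_proj y" unfolding circ_proj_def
    by (simp add: distrib_left cis_mult[symmetric])
qed

lemma circ_proj_norm [simp]: "cmod (circ_proj x) = 1"
  by (simp add: circ_proj_def)

lemma circ_proj_cont: "continuous_on S circ_proj"
  unfolding circ_proj_def cis_conv_exp by (intro continuous_intros)

lemma circle_lift_props:
  assumes cont: "continuous_on (sphere 0 1) g" and sph: "\<And>z. cmod z = 1 \<Longrightarrow> cmod (g z) = 1"
  shows "continuous_on UNIV (circle_lift g)" "\<And>t. circ_proj (circle_lift g t) = g (circ_proj t)"
proof -
  define h where "h t = g (circ_proj t)" for t
  have hc: "continuous_on UNIV h" unfolding h_def
    by (rule continuous_on_compose2[OF cont circ_proj_cont]) auto
  have hn: "h t \<noteq> 0" for t using sph[of "circ_proj t"] unfolding h_def by auto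
  obtain l where l0: "continuous_on UNIV l" "\<And>t. t \<in> UNIV \<Longrightarrow> h t = exp (l t)"
    by (rule continuous_logarithm_on_contractible[OF hc contractible_UNIV]) (use hn in auto)
  have l: "continuous_on UNIV l" "\<And>t. h t = exp (l t)" using l0 by auto
  define G where "G t = Im (l t) / (2*pi) - of_int (floor (Im (l 0) / (2*pi)))" for t
  have Gc: "continuous_on UNIV G" unfolding G_def by (intro continuous_intros l(1)) auto
  have Gp: "circ_proj (G t) = h t" for t
  proof -
    have "circ_proj (G t) = cis (Im (l t)) * cis (- (2 * pi * of_int (floor (Im (l 0) / (2*pi)))))"
      unfolding circ_proj_def G_def by (simp add: cis_mult right_diff_distrib)
    also have "\<dots> = cis (Im (l t))"
    proof -
      have "cis (2 * pi * real_of_int (- floor (Im (l 0) / (2*pi)))) = 1"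
        by (rule cis_multiple_2pi) simp
      then show ?thesis by simp
    qed
    also have "\<dots> = h t"
    proof -
      have "cmod (exp (l t)) = 1" using sph[of "circ_proj t"] l(2)[of t] unfolding h_def by simp
      then have "exp (Re (l t)) = 1" by simp
      then show ?thesis using l(2)[of t] exp_eq_polar[of "l t"] by simp
    qed
    finally show ?thesis .
  qed
  have G0: "0 \<le> G 0 \<and> G 0 < 1"
  proof -
    define y where "y = Im (l 0) / (2*pi)"
    have "of_int (floor y) \<le> y" "y < of_int (floor y) + 1" by linarith+
    then show ?thesis unfolding G_def y_def[symmetric] by linarith
  qed
  have uniq: "G' = G" if G': "continuous_on UNIV G' \<and> (\<forall>t. circ_proj (G' t) = g (circ_proj t)) \<and> 0 \<le> G' 0 \<and> G' 0 < 1" for G'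
  proof -
    define d where "d t = G' t - G t" for t
    have dint: "d t \<in> \<int>" for t
    proof -
      have "circ_proj (G' t) = circ_proj (G t)" using G' Gp unfolding h_def by simp
      from circ_proj_eq_iff[THEN iffD1, OF this] obtain k :: int where "G' t = G t + k" by blast
      then show ?thesis unfolding d_def by simp
    qed
    have dc: "continuous_on UNIV d" unfolding d_def using G' Gc by (intro continuous_intros) auto
    have "d constant_on UNIV"
    proof (rule continuous_discrete_range_constant[OF connected_UNIV dc])
      fix x :: real assume "x \<in> UNIV"
      show "\<exists>e>0. \<forall>y. y \<in> UNIV \<and> d y \<noteq> d x \<longrightarrow> e \<le> norm (d y - d x)"
      proof (intro exI[of _ 1] conjI allI impI)
        fix y assume "y \<in> UNIV \<and> d y \<noteq> d x"
        moreover obtain a where a: "d y = of_int a" using dint[of y] Ints_cases by metis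
        moreover obtain b where b: "d x = of_int b" using dint[of x] Ints_cases by metis
        ultimately have "a \<noteq> b" by auto
        then have "1 \<le> \<bar>a - b\<bar>" by arith
        then have "1 \<le> \<bar>real_of_int (a - b)\<bar>" by (metis of_int_1_le_iff of_int_abs)
        then show "1 \<le> norm (d y - d x)" using a b by simp
      qed simp
    qed
    then have "d t = d 0" for t unfolding constant_on_def by (metis UNIV_I)
    moreover have "d 0 = 0"
    proof -
      obtain a where a: "d 0 = of_int a" using dint[of 0] Ints_cases by metis
      moreover have "-1 < d 0" "d 0 < 1" unfolding d_def using G' G0 by auto
      ultimately have "-1 < a" "a < 1" by simp_all
      then have "a = 0" by arith
      then show ?thesis using a by simp
    qed
    ultimately show ?thesis unfolding d_def by (auto simp: fun_eq_iff)
  qed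
  have ex: "continuous_on UNIV G \<and> (\<forall>t. circ_proj (G t) = g (circ_proj t)) \<and> 0 \<le> G 0 \<and> G 0 < 1"
    using Gc Gp G0 unfolding h_def by auto
  have "circle_lift g = G" unfolding circle_lift_def
    apply (rule the_equality)
     apply (rule ex)
    apply (rule uniq)
    apply assumption
    done
  then show "continuous_on UNIV (circle_lift g)" "\<And>t. circ_proj (circle_lift g t) = g (circ_proj t)"
    using ex by auto
qed

lemma lift_deriv:
  fixes G :: "real \<Rightarrow> real" and h :: "real \<Rightarrow> complex"
  assumes Gc: "continuous_on UNIV G" and Gp: "\<And>t. circ_proj (G t) = h t"
    and hd: "(h has_vector_derivative h') (at x within S)" and xS: "x \<in> S"
  shows "(G has_real_derivative (Im (h' / h x) / (2*pi))) (at x within S)"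
proof -
  have hx: "h x \<noteq> 0" using Gp[of x] circ_proj_norm[of "G x"] by auto
  define q where "q t = h t / h x" for t
  have qd: "(q has_vector_derivative (h' / h x)) (at x within S)"
    unfolding q_def by (rule has_vector_derivative_divide[OF hd])
  have qx: "q x = 1" using hx unfolding q_def by simp
  have Ld: "(Ln has_field_derivative inverse (q x)) (at (q x) within q ` S)"
    unfolding qx by (rule has_field_derivative_at_within) (rule has_field_derivative_Ln, simp)
  have d1: "((Ln \<circ> q) has_vector_derivative (h' / h x * inverse (q x))) (at x within S)"
    by (rule field_vector_diff_chain_within[OF qd Ld])
  have d2: "((\<lambda>t. Im ((Ln \<circ> q) t)) has_vector_derivative Im (h' / h x)) (at x within S)"
    using bounded_linear.has_vector_derivative[OF bounded_linear_Im d1] qx by simp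
  define F where "F t = G x + Im (Ln (q t)) / (2*pi)" for t
  have d3: "(F has_vector_derivative (Im (h' / h x) / (2*pi))) (at x within S)"
    unfolding F_def using has_vector_derivative_add[OF has_vector_derivative_const[of "G x"] has_vector_derivative_divide[OF d2, of "2*pi"]]
    by (simp add: o_def)
  obtain d where d: "d > 0" "\<And>t. dist t x < d \<Longrightarrow> dist (G t) (G x) < 1/2"
  proof -
    have "isCont G x" using Gc by (simp add: continuous_on_eq_continuous_at)
    then obtain d where "d > 0" "\<forall>t. dist t x < d \<longrightarrow> dist (G t) (G x) < 1/2"
      unfolding continuous_at_eps_delta by (meson half_gt_zero_iff zero_less_one)
    then show ?thesis using that by blast
  qed
  have eq: "F t = G t" if "dist t x < d" for t
  proof -
    have gl: "\<bar>G t - G x\<bar> < 1/2" using d(2)[OF that] by (simp add: dist_real_def)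
    have "q t = circ_proj (G t) / circ_proj (G x)" unfolding q_def Gp by simp
    also have "\<dots> = cis (2*pi*(G t - G x))" unfolding circ_proj_def
      by (simp add: cis_divide right_diff_distrib)
    also have "\<dots> = exp (\<i> * of_real (2*pi*(G t - G x)))" by (simp add: cis_conv_exp)
    finally have qt: "q t = exp (\<i> * of_real (2*pi*(G t - G x)))" .
    have gl2: "-1/2 < G t - G x" "G t - G x < 1/2" using gl by linarith+
    have "-pi < 2*pi*(G t - G x)" using mult_strict_left_mono[OF gl2(1), of "2*pi"] pi_gt_zero by simp
    moreover have "2*pi*(G t - G x) \<le> pi" using mult_strict_left_mono[OF gl2(2), of "2*pi"] pi_gt_zero by simp
    ultimately have "-pi < 2*pi*(G t - G x)" "2*pi*(G t - G x) \<le> pi" by auto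
    then have "Ln (q t) = \<i> * of_real (2*pi*(G t - G x))" unfolding qt
      by (intro Ln_exp) auto
    then show ?thesis unfolding F_def by simp
  qed
  have "(G has_vector_derivative (Im (h' / h x) / (2*pi))) (at x within S)"
    by (rule has_vector_derivative_transform_within[OF d3 d(1) xS]) (use eq in auto)
  then show ?thesis by (simp add: has_real_derivative_iff_has_vector_derivative)
qed

lemma circ_proj_deriv:
  "(circ_proj has_vector_derivative (2 * pi * \<i> * circ_proj t)) (at t within S)"
proof -
  have e: "circ_proj x = exp (2 * pi * \<i> * complex_of_real x)" for x
    unfolding circ_proj_def cis_conv_exp by (simp add: mult_ac)
  have "((\<lambda>z. exp (2 * pi * \<i> * z)) has_field_derivative (2 * pi * \<i> * exp (2 * pi * \<i> * complex_of_real t))) (at (complex_of_real t))"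
    by (auto intro!: derivative_eq_intros)
  from has_vector_derivative_real_field[OF this, of S]
  show ?thesis unfolding e[abs_def] by simp
qed

lemma mob_deriv:
  assumes v: "cmod v = 1" and P: "cmod P < 1"
  shows "(mob P has_field_derivative (of_real ((cmod P)^2) - 1) / (1 - cnj P * v)^2) (at v)"
proof -
  have dn: "1 - cnj P * v \<noteq> 0" by (rule denom_nz[OF v P])
  have d: "((\<lambda>z. (P - z) / (1 - cnj P * z)) has_field_derivative
        ((-1) * (1 - cnj P * v) - (P - v) * (- cnj P)) / ((1 - cnj P * v) * (1 - cnj P * v))) (at v)"
    by (rule DERIV_divide) (use dn in \<open>auto intro!: derivative_eq_intros\<close>)
  have eq: "((-1) * (1 - cnj P * v) - (P - v) * (- cnj P)) = of_real ((cmod P)^2) - 1"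
    by (simp add: algebra_simps complex_norm_square[unfolded of_real_power])
  show ?thesis unfolding mob_def[abs_def] power2_eq_square[of "1 - cnj P * v"] using d[unfolded eq] by simp
qed

lemma mob_circ_deriv:
  fixes t :: real
  assumes P: "cmod P < 1"
  defines "v \<equiv> circ_proj t"
  shows "((\<lambda>t. mob P (circ_proj t)) has_vector_derivative
           (2 * pi * \<i> * v) * ((of_real ((cmod P)^2) - 1) / (1 - cnj P * v)^2)) (at t within S)"
proof -
  have v1: "cmod v = 1" unfolding v_def by simp
  have Ld: "(mob P has_field_derivative (of_real ((cmod P)^2) - 1) / (1 - cnj P * v)^2) (at (circ_proj t) within circ_proj ` S)"
    unfolding v_def[symmetric] by (rule has_field_derivative_at_within[OF mob_deriv[OF v1 P]])
  from field_vector_diff_chain_within[OF circ_proj_deriv Ld]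
  show ?thesis unfolding v_def by (simp add: o_def)
qed

lemma fld_aux: fixes a c Y Q :: complex assumes "Y \<noteq> 0" "Q \<noteq> 0"
  shows "a * (c / Y^2) / (Q / Y) = a * c / (Y * Q)"
  using assms by (simp add: field_simps power2_eq_square)

lemma mob_deriv_value:
  assumes v: "cmod v = 1" and P: "cmod P < 1"
  shows "Im ((2 * pi * \<i> * v) * ((of_real ((cmod P)^2) - 1) / (1 - cnj P * v)^2) / mob P v) / (2*pi)
         = cmod (P - mob P v) / cmod (v - P)"
proof -
  have dn: "1 - cnj P * v \<noteq> 0" by (rule denom_nz[OF v P])
  have Pv: "P \<noteq> v" using v P by auto
  have h: "(Re v)^2 + (Im v)^2 = 1" using unit_re_im v by blast
  have k: "(1 - cnj P * v) * (P - v) = - v * of_real ((cmod (v - P))^2)"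
    unfolding cmod_power2 using h
    apply (simp add: complex_eq_iff algebra_simps power2_eq_square)
    unfolding power2_eq_square by algebra
  have vnz: "v \<noteq> 0" using v by auto
  have D: "(cmod (v - P))^2 > 0" using Pv by simp
  have "(2 * pi * \<i> * v) * ((of_real ((cmod P)^2) - 1) / (1 - cnj P * v)^2) / mob P v
        = (2 * pi * \<i> * v) * (of_real ((cmod P)^2) - 1) / ((1 - cnj P * v) * (P - v))"
    unfolding mob_def by (rule fld_aux) (use dn Pv in auto)
  also have "\<dots> = 2 * pi * \<i> * of_real ((1 - (cmod P)^2) / (cmod (v - P))^2)"
    unfolding k using vnz D by (simp add: field_simps)
  finally have e1: "Im ((2 * pi * \<i> * v) * ((of_real ((cmod P)^2) - 1) / (1 - cnj P * v)^2) / mob P v) / (2*pi)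
      = (1 - (cmod P)^2) / (cmod (v - P))^2" by simp
  have n1: "cmod (1 - cnj P * v) = cmod (v - P)"
  proof -
    have "(cmod (1 - cnj P * v))^2 = (cmod (v - P))^2"
      unfolding cmod_power2 using h apply (simp add: power2_eq_square algebra_simps)
      unfolding power2_eq_square by algebra
    then show ?thesis by (simp add: power2_eq_iff_nonneg)
  qed
  define r where "r = 1 - (cmod P)^2"
  have r: "r > 0" unfolding r_def using P by (simp add: abs_square_less_1)
  have "P - mob P v = v * of_real r / (1 - cnj P * v)"
    unfolding mob_def r_def using dn by (simp add: field_simps complex_norm_square[unfolded of_real_power])
  then have "cmod (P - mob P v) = cmod v * \<bar>r\<bar> / cmod (1 - cnj P * v)"
    by (simp only: norm_mult norm_divide norm_of_real)
  then have "cmod (P - mob P v) = (1 - (cmod P)^2) / cmod (v - P)"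
    using v r n1 unfolding r_def by simp
  then have "cmod (P - mob P v) / cmod (v - P) = (1 - (cmod P)^2) / (cmod (v - P))^2"
    by (simp add: power2_eq_square)
  with e1 show ?thesis by simp
qed



lemma sinpi_pos: "0 < y \<Longrightarrow> y < 1 \<Longrightarrow> sin (pi * y) > 0"
  by (rule sin_gt_zero) auto

lemma sinpi_nonneg: "0 \<le> y \<Longrightarrow> y \<le> 1 \<Longrightarrow> sin (pi * y) \<ge> 0"
  by (rule sin_ge_zero) (auto simp: mult_left_le)

lemma sinpi_neg: "-1 < y \<Longrightarrow> y < 0 \<Longrightarrow> sin (pi * y) < 0"
  using sinpi_pos[of "-y"] by simp

lemma sinpi_nonpos: "-1 \<le> y \<Longrightarrow> y \<le> 0 \<Longrightarrow> sin (pi * y) \<le> 0"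
  using sinpi_nonneg[of "-y"] by simp

lemma cis_diff_prod: "cis (X + Y) - cis (X - Y) = cis X * (2 * \<i> * of_real (sin Y))"
proof -
  have e1: "cis (X + Y) = cis X * cis Y" "cis (X - Y) = cis X * cis (-Y)" by (simp_all add: cis_mult)
  have "cis (X + Y) - cis (X - Y) = cis X * (cis Y - cis (-Y))"
    unfolding e1 by (simp add: algebra_simps)
  also have "cis Y - cis (-Y) = 2 * \<i> * of_real (sin Y)"
    by (simp add: complex_eq_iff)
  finally show ?thesis .
qed

lemma circ_proj_diff:
  "circ_proj b - circ_proj a = cis (pi * (a + b)) * (2 * \<i> * of_real (sin (pi * (b - a))))"
proof -
  have "circ_proj b = cis (pi * (a + b) + pi * (b - a))" unfolding circ_proj_def
    by (simp add: algebra_simps)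
  moreover have "circ_proj a = cis (pi * (a + b) - pi * (b - a))" unfolding circ_proj_def
    by (simp add: algebra_simps)
  ultimately show ?thesis using cis_diff_prod by simp
qed

lemma cr_circle:
  "cr (circ_proj b - circ_proj a) (circ_proj x - circ_proj a)
     = 4 * sin (pi * (b - a)) * sin (pi * (x - a)) * sin (pi * (x - b))"
proof -
  have "cr (circ_proj b - circ_proj a) (circ_proj x - circ_proj a)
      = Im (cnj (cis (pi * (a + b))) * cis (pi * (a + x)) * of_real (4 * sin (pi * (b - a)) * sin (pi * (x - a))))"
    unfolding circ_proj_diff cr_def by (simp add: algebra_simps)
  also have "cnj (cis (pi * (a + b))) * cis (pi * (a + x)) = cis (pi * (x - b))"
    by (simp add: cis_cnj cis_mult algebra_simps)
  finally show ?thesis by (simp add: mult_ac)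
qed

lemma lift_window:
  assumes "cmod w = 1"
  shows "\<exists>t. circ_proj t = w \<and> a \<le> t \<and> t < a + 1"
proof -
  define t0 where "t0 = Arg w / (2*pi)"
  have w0: "w \<noteq> 0" using assms by auto
  have c0: "circ_proj t0 = w" unfolding circ_proj_def t0_def using cis_Arg[OF w0] assms
    by (simp add: sgn_div_norm)
  define t where "t = t0 - of_int (floor (t0 - a))"
  have "circ_proj t = circ_proj t0" unfolding t_def circ_proj_eq_iff
    by (intro exI[of _ "- floor (t0 - a)"]) simp
  moreover have "a \<le> t" "t < a + 1" unfolding t_def by linarith+
  ultimately show ?thesis using c0 by blast
qed

lemma norm_line_sq_gen:
  fixes Y d :: complex and s :: real
  shows "(cmod (Y + of_real s * d))^2 = (cmod Y)^2 + 2 * s * Re (cnj Y * d) + s^2 * (cmod d)^2"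
  unfolding cmod_power2 by (simp add: power2_eq_square algebra_simps)

lemma near_point:
  assumes X: "cmod X < 1" and Y: "cmod Y < 1" and XY: "X \<noteq> Y"
  shows "cmod (line_circle_near X Y) = 1 \<and> (\<exists>s>1. line_circle_near X Y = Y + of_real s * (X - Y))"
proof -
  define d where "d = X - Y"
  have d0: "d \<noteq> 0" using XY d_def by simp
  define f where "f s = cmod (Y + of_real s * d)" for s
  define T where "T = 1 + 2 / cmod d"
  have T1: "1 \<le> T" unfolding T_def by simp
  have fc: "continuous_on {1..T} f" unfolding f_def by (intro continuous_intros)
  have f1: "f 1 \<le> 1" unfolding f_def d_def using X by simp
  have fT: "1 \<le> f T"
  proof -
    have "cmod (of_real T * d) \<le> cmod (Y + of_real T * d) + cmod Y"
      by (metis add.commute norm_diff_ineq add_diff_cancel_left' diff_le_eq norm_minus_commute)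
    moreover have "cmod (of_real T * d) = T * cmod d" using T1 by (simp add: norm_mult)
    moreover have "T * cmod d = cmod d + 2" unfolding T_def using d0 by (simp add: field_simps)
    ultimately show ?thesis unfolding f_def using Y norm_ge_zero[of d] by linarith
  qed
  obtain s0 where s0: "1 \<le> s0" "s0 \<le> T" "f s0 = 1" using IVT'[of f 1 1 T, OF f1 fT T1 fc] by blast
  have s01: "s0 > 1" using s0 f1 X unfolding f_def d_def by (cases "s0 = 1") auto
  define u0 where "u0 = Y + of_real s0 * d"
  have P0: "on_circle u0 \<and> on_line X Y u0 \<and> cmod (u0 - X) < cmod (u0 - Y)"
  proof (intro conjI)
    show "on_circle u0" using s0 unfolding on_circle_def u0_def f_def by simp
    show "on_line X Y u0" unfolding on_line_def u0_def d_def
      by (rule exI[of _ "1 - s0"]) (simp add: algebra_simps)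
    have e: "u0 - X = of_real (s0 - 1) * d" "u0 - Y = of_real s0 * d" unfolding u0_def d_def
      by (simp_all add: algebra_simps)
    have "cmod (u0 - X) = \<bar>s0 - 1\<bar> * cmod d" "cmod (u0 - Y) = \<bar>s0\<bar> * cmod d"
      unfolding e by (simp_all only: norm_mult norm_of_real)
    then show "cmod (u0 - X) < cmod (u0 - Y)" using s01 d0 by simp
  qed
  have U: "u = u0" if u: "on_circle u \<and> on_line X Y u \<and> cmod (u - X) < cmod (u - Y)" for u
  proof -
    obtain t where t: "u = X + of_real t * (Y - X)" using u unfolding on_line_def by blast
    define s where "s = 1 - t"
    have us: "u = Y + of_real s * d" unfolding t s_def d_def by (simp add: algebra_simps)
    have e: "u - X = of_real (s - 1) * d" "u - Y = of_real s * d" unfolding us d_def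
      by (simp_all add: algebra_simps)
    have "cmod (u - X) = \<bar>s - 1\<bar> * cmod d" "cmod (u - Y) = \<bar>s\<bar> * cmod d"
      unfolding e by (simp_all only: norm_mult norm_of_real)
    then have "\<bar>s - 1\<bar> < \<bar>s\<bar>" using u d0 by simp
    then have sh: "s > 1/2" by linarith
    have s1: "s > 1"
    proof (rule ccontr)
      assume "\<not> s > 1"
      then have "u = of_real (1 - s) * Y + of_real s * X" unfolding us d_def by (simp add: algebra_simps)
      then have "cmod u \<le> cmod (of_real (1 - s) * Y) + cmod (of_real s * X)"
        by (simp only: norm_triangle_ineq)
      also have "\<dots> = (1 - s) * cmod Y + s * cmod X"
        using \<open>\<not> s > 1\<close> sh by (simp only: norm_mult norm_of_real)
      finally have "cmod u \<le> (1 - s) * cmod Y + s * cmod X" .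
      also have "\<dots> < (1 - s) * 1 + s * 1"
        using \<open>\<not> s > 1\<close> sh X Y by (intro add_le_less_mono mult_left_mono mult_strict_left_mono) auto
      finally show False using u unfolding on_circle_def by simp
    qed
    show "u = u0"
    proof (rule ccontr)
      assume ne: "u \<noteq> u0"
      then have sne: "s \<noteq> s0" unfolding us u0_def by auto
      define a where "a = (cmod d)^2"
      define b where "b = 2 * Re (cnj Y * d)"
      define c where "c = (cmod Y)^2 - 1"
      have gs: "a * s^2 + b * s + c = 0" using norm_line_sq_gen[of Y s d] u unfolding us on_circle_def a_def b_def c_def
        by (simp add: algebra_simps)
      have gs0: "a * s0^2 + b * s0 + c = 0" using norm_line_sq_gen[of Y s0 d] s0(3) unfolding f_def a_def b_def c_def
        by (simp add: algebra_simps)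
      have x2: "(cmod X)^2 < 1" using X by (simp add: abs_square_less_1)
      have "(cmod (Y + of_real 1 * d))^2 = (cmod X)^2" by (simp add: d_def)
      then have g1: "a + b + c < 0" using norm_line_sq_gen[of Y 1 d] x2 unfolding a_def b_def c_def
        by simp
      have "(s - s0) * (a + b + c - a * (1 - s) * (1 - s0)) = 0"
      proof -
        have "(s - s0) * (a + b + c - a * (1 - s) * (1 - s0)) = (a * s^2 + b * s + c) - (a * s0^2 + b * s0 + c) - s0 * (a * s^2 + b * s + c) + s * (a * s0^2 + b * s0 + c)"
          by (simp add: algebra_simps power2_eq_square)
        then show ?thesis using gs gs0 by simp
      qed
      then have "a + b + c = a * (1 - s) * (1 - s0)" using sne by simp
      moreover have "(1 - s) * (1 - s0) \<ge> 0" using s1 s01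
        by (simp add: mult_nonpos_nonpos)
      then have "a * (1 - s) * (1 - s0) \<ge> 0" unfolding a_def
        by (metis mult.assoc zero_le_power2 zero_le_mult_iff)
      ultimately show False using g1 by simp
    qed
  qed
  have "line_circle_near X Y = u0" unfolding line_circle_near_def
    apply (rule the_equality)
     apply (rule P0)
    apply (erule U)
    done
  then show ?thesis using P0 s01 unfolding on_circle_def u0_def d_def by auto
qed



lemma cr_identity: "cr x y * cr c a = cr c x * cr a y + cr x a * cr c y"
  by (simp add: cr_alt algebra_simps)

lemma idx_facts:
  fixes n i :: nat
  assumes n: "3 \<le> n" and i: "i < n"
  shows "Suc i mod n < n" "Suc (Suc i mod n) mod n < n" "Suc i mod n \<noteq> i"
    "Suc (Suc i mod n) mod n \<noteq> i" "Suc (Suc i mod n) mod n \<noteq> Suc i mod n"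
  using n i by (auto simp: mod_Suc)

lemma part1:
  fixes n :: nat and A :: "nat \<Rightarrow> complex" and u :: "nat \<Rightarrow> complex" and B :: "complex set"
  assumes poly: "ccw_convex_polygon n A" and inD: "\<forall>i<n. cmod (A i) < 1"
    and B_def: "B = convex hull (A ` {..<n})"
    and u_def: "\<forall>i<n. u i = line_circle_near (A i) (A (Suc i mod n))"
    and i: "i < n" and vin: "v \<in> arc_co (u i) (u (Suc i mod n))"
  shows "psi_set B v = mob (A (Suc i mod n)) v"
proof -
  define i1 where "i1 = Suc i mod n"
  define i2 where "i2 = Suc i1 mod n"
  have n3: "3 \<le> n" using poly unfolding ccw_convex_polygon_def by simp
  have ix: "i1 < n" "i2 < n" "i1 \<noteq> i" "i2 \<noteq> i" "i2 \<noteq> i1"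
    using idx_facts[OF n3 i] unfolding i1_def i2_def by auto
  have edge: "\<And>e k. e < n \<Longrightarrow> k < n \<Longrightarrow> k \<noteq> e \<Longrightarrow> k \<noteq> Suc e mod n \<Longrightarrow>
      cr (A (Suc e mod n) - A e) (A k - A e) > 0"
    using poly unfolding ccw_convex_polygon_def cr_def by blast
  define X where "X = A i"
  define P where "P = A i1"
  define Z where "Z = A i2"
  have E1: "\<And>k. k < n \<Longrightarrow> k \<noteq> i \<Longrightarrow> k \<noteq> i1 \<Longrightarrow> cr (P - X) (A k - X) > 0"
    using edge[OF i] unfolding P_def X_def i1_def by blast
  have E2: "\<And>k. k < n \<Longrightarrow> k \<noteq> i1 \<Longrightarrow> k \<noteq> i2 \<Longrightarrow> cr (Z - P) (A k - P) > 0"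
    using edge[OF ix(1)] unfolding P_def Z_def i2_def by blast
  have E1z: "cr (P - X) (Z - X) > 0" using E1[OF ix(2) ix(4) ix(5)] unfolding Z_def .
  have E2x: "cr (Z - P) (X - P) > 0" using E2[OF i ix(3)[symmetric]] ix(4) unfolding X_def by auto
  have XP: "X \<noteq> P" using E1z by (auto simp: cr_alt)
  have PZ: "P \<noteq> Z" using E2x by (auto simp: cr_alt)
  have Xd: "cmod X < 1" "cmod P < 1" "cmod Z < 1" using inD i ix unfolding X_def P_def Z_def by auto
  have ui: "u i = line_circle_near X P" using u_def i unfolding X_def P_def i1_def by auto
  have ui1: "u i1 = line_circle_near P Z" using u_def ix(1) unfolding P_def Z_def i2_def by auto
  obtain s where s: "s > 1" "u i = P + of_real s * (X - P)" and uin: "cmod (u i) = 1"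
    using near_point[OF Xd(1) Xd(2) XP] ui by auto
  obtain s' where s': "s' > 1" "u i1 = Z + of_real s' * (P - Z)" and u1n: "cmod (u i1) = 1"
    using near_point[OF Xd(2) Xd(3) PZ] ui1 by auto
  have uneq: "u i \<noteq> u i1"
  proof
    assume eq: "u i = u i1"
    have "cr (P - X) (Z - X) * (s' - 1) = 0"
    proof -
      have "of_real s * (X - P) = of_real (s' - 1) * (P - Z)" using eq s(2) s'(2) by (simp add: algebra_simps)
      then have "cr (of_real s * (X - P)) (P - X) = cr (of_real (s' - 1) * (P - Z)) (P - X)" by simp
      then show ?thesis by (simp add: cr_alt algebra_simps)
    qed
    then show False using E1z s' by simp
  qed
  define vi where "vi = mob P (u i)"
  define vi1 where "vi1 = mob P (u i1)"
  define \<sigma> where "\<sigma> = 2*(1 - Re (cnj (u i) * P)) / (cmod (P - u i))^2"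
  define \<sigma>' where "\<sigma>' = 2*(1 - Re (cnj (u i1) * P)) / (cmod (P - u i1))^2"
  note m1 = mob_props[OF uin Xd(2), folded \<sigma>_def vi_def]
  note m2 = mob_props[OF u1n Xd(2), folded \<sigma>'_def vi1_def]
  from vin obtain x a b where ab: "v = circ_proj x" "circ_proj a = u i" "circ_proj b = u i1"
    "a < b" "b \<le> a + 1" "a \<le> x" "x < b"
    unfolding arc_co_def i1_def by blast
  have b1: "b < a + 1"
  proof (rule ccontr)
    assume "\<not> b < a + 1"
    then have "b = a + 1" using ab by simp
    then have "circ_proj b = circ_proj a" unfolding circ_proj_eq_iff by (intro exI[of _ 1]) simp
    then show False using ab uneq by simp
  qed
  obtain c where c: "circ_proj c = vi" "a \<le> c" "c < a + 1" using lift_window[OF m1(3)] by blast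
  have ca: "c \<noteq> a" using c ab m1(4) by auto
  obtain d where d: "circ_proj d = vi1" "b \<le> d" "d < b + 1" using lift_window[OF m2(3)] by blast
  have db: "d \<noteq> b" using d ab m2(4) by auto
  have F1: "cr (vi - u i) (u i1 - u i) = - (\<sigma> * s * (s' - 1)) * cr (P - X) (Z - X)"
    unfolding m1(2) s(2) s'(2) by (simp add: cr_alt algebra_simps)
  have F1n: "cr (vi - u i) (u i1 - u i) < 0"
    unfolding F1 using m1(1) s(1) s'(1) E1z by (simp add: mult_pos_pos)
  have bc: "b < c"
  proof -
    have "cr (vi - u i) (u i1 - u i) = 4 * sin (pi * (c - a)) * sin (pi * (b - a)) * sin (pi * (b - c))"
      using cr_circle[of c a b] c ab by simp
    moreover have "sin (pi * (c - a)) > 0" using c ca by (intro sinpi_pos) auto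
    moreover have "sin (pi * (b - a)) > 0" using ab b1 by (intro sinpi_pos) auto
    ultimately have "sin (pi * (b - c)) < 0" using F1n
      by (smt (verit) mult_pos_pos mult_nonneg_nonneg)
    moreover have "b - c < 1" using c ab b1 by simp
    ultimately show ?thesis using sinpi_nonneg[of "b - c"] by fastforce
  qed
  have F2: "cr (vi1 - u i1) (u i - u i1) = \<sigma>' * (s' - 1) * s * cr (Z - P) (X - P)"
    unfolding m2(2) s(2) s'(2) by (simp add: cr_alt algebra_simps)
  have F2p: "cr (vi1 - u i1) (u i - u i1) > 0"
    unfolding F2 using m2(1) s(1) s'(1) E2x by simp
  have da: "d < a + 1"
  proof -
    have cpa: "circ_proj (a + 1) = u i" using ab(2) unfolding circ_proj_eq_iff[symmetric]
      by (metis circ_proj_eq_iff of_int_1)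
    have "cr (vi1 - u i1) (u i - u i1) = 4 * sin (pi * (d - b)) * sin (pi * (a + 1 - b)) * sin (pi * (a + 1 - d))"
      using cr_circle[of d b "a + 1"] d ab cpa by simp
    moreover have "sin (pi * (d - b)) > 0" using d db by (intro sinpi_pos) auto
    moreover have "sin (pi * (a + 1 - b)) > 0" using ab b1 by (intro sinpi_pos) auto
    ultimately have "sin (pi * (a + 1 - d)) > 0" using F2p
      by (smt (verit) mult_pos_pos mult_nonneg_nonneg mult_nonpos_nonneg mult_le_0_iff)
    moreover have "-1 \<le> a + 1 - d" using d ab by simp
    ultimately show ?thesis using sinpi_nonpos[of "a + 1 - d"] by fastforce
  qed
  have T1: "cr (vi - u i) (v - u i) \<le> 0"
  proof -
    have "cr (vi - u i) (v - u i) = 4 * sin (pi * (c - a)) * sin (pi * (x - a)) * sin (pi * (x - c))"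
      using cr_circle[of c a x] c ab by simp
    moreover have "sin (pi * (c - a)) > 0" using c ca by (intro sinpi_pos) auto
    moreover have "sin (pi * (x - a)) \<ge> 0" using ab b1 by (intro sinpi_nonneg) auto
    moreover have "sin (pi * (x - c)) \<le> 0" using ab bc c by (intro sinpi_nonpos) auto
    ultimately show ?thesis by (simp add: mult_nonneg_nonpos)
  qed
  have T2: "cr (vi1 - u i1) (v - u i1) \<ge> 0"
  proof -
    have "circ_proj (x + 1) = circ_proj x" unfolding circ_proj_eq_iff
      by (intro exI[of _ 1]) simp
    then have cpx: "circ_proj (x + 1) = v" using ab(1) by simp
    have "cr (vi1 - u i1) (v - u i1) = 4 * sin (pi * (d - b)) * sin (pi * (x + 1 - b)) * sin (pi * (x + 1 - d))"
      using cr_circle[of d b "x + 1"] d ab cpx by simp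
    moreover have "sin (pi * (d - b)) > 0" using d db by (intro sinpi_pos) auto
    moreover have "sin (pi * (x + 1 - b)) \<ge> 0" using ab b1 by (intro sinpi_nonneg) auto
    moreover have "sin (pi * (x + 1 - d)) \<ge> 0" using ab da d by (intro sinpi_nonneg) auto
    ultimately show ?thesis by simp
  qed
  have f1e: "cr (vi - u i) (v - u i) = - (\<sigma> * s) * cr (X - P) (v - P)"
    unfolding m1(2) s(2) by (simp add: cr_alt algebra_simps)
  have f1: "cr (X - P) (v - P) \<ge> 0"
  proof -
    have "\<sigma> * s > 0" using m1(1) s(1) by simp
    then show ?thesis using T1 unfolding f1e by (simp add: zero_le_mult_iff)
  qed
  have f2e: "cr (vi1 - u i1) (v - u i1) = (\<sigma>' * (s' - 1)) * cr (Z - P) (v - P)"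
    unfolding m2(2) s'(2) by (simp add: cr_alt algebra_simps)
  have f2: "cr (Z - P) (v - P) \<ge> 0"
  proof -
    have "\<sigma>' * (s' - 1) > 0" using m2(1) s'(1) by simp
    then show ?thesis using T2 unfolding f2e by (simp add: zero_le_mult_iff)
  qed
  have allk: "cr (P - v) (A k - v) \<ge> 0" if k: "k < n" for k
  proof -
    have ca': "cr (Z - P) (A k - P) \<ge> 0"
      using E2[OF k] by (cases "k = i1"; cases "k = i2") (auto simp: P_def Z_def cr_alt less_imp_le)
    have xa: "cr (A k - P) (X - P) \<ge> 0"
    proof -
      have "cr (A k - P) (X - P) = cr (P - X) (A k - X)" by (simp add: cr_alt algebra_simps)
      then show ?thesis
        using E1[OF k] by (cases "k = i1"; cases "k = i") (auto simp: P_def X_def cr_alt less_imp_le)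
    qed
    have "cr (A k - P) (v - P) * cr (Z - P) (X - P) = cr (Z - P) (A k - P) * cr (X - P) (v - P) + cr (A k - P) (X - P) * cr (Z - P) (v - P)"
      by (rule cr_identity)
    moreover have "cr (Z - P) (A k - P) * cr (X - P) (v - P) + cr (A k - P) (X - P) * cr (Z - P) (v - P) \<ge> 0"
      using ca' xa f1 f2 by simp
    ultimately have "cr (A k - P) (v - P) * cr (Z - P) (X - P) \<ge> 0" by simp
    then have "cr (A k - P) (v - P) \<ge> 0" using E2x by (simp add: zero_le_mult_iff)
    moreover have "cr (P - v) (A k - v) = cr (A k - P) (v - P)" by (simp add: cr_alt algebra_simps)
    ultimately show ?thesis by simp
  qed
  have vn: "cmod v = 1" using ab by simp
  show ?thesis unfolding i1_def[symmetric] P_def[symmetric]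
    using psi_set_vertex[OF B_def inD vn ix(1)] allk unfolding P_def by blast
qed



lemma poly_basic:
  fixes n :: nat and A :: "nat \<Rightarrow> complex" and u :: "nat \<Rightarrow> complex"
  assumes poly: "ccw_convex_polygon n A" and inD: "\<forall>i<n. cmod (A i) < 1"
    and u_def: "\<forall>i<n. u i = line_circle_near (A i) (A (Suc i mod n))"
    and i: "i < n"
  shows "cmod (u i) = 1" "u i \<noteq> u (Suc i mod n)"
    "psi_set (convex hull (A ` {..<n})) (u i) = mob (A i) (u i)"
proof -
  define i1 where "i1 = Suc i mod n"
  define i2 where "i2 = Suc i1 mod n"
  have n3: "3 \<le> n" using poly unfolding ccw_convex_polygon_def by simp
  have ix: "i1 < n" "i2 < n" "i1 \<noteq> i" "i2 \<noteq> i" "i2 \<noteq> i1"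
    using idx_facts[OF n3 i] unfolding i1_def i2_def by auto
  have edge: "\<And>e k. e < n \<Longrightarrow> k < n \<Longrightarrow> k \<noteq> e \<Longrightarrow> k \<noteq> Suc e mod n \<Longrightarrow>
      cr (A (Suc e mod n) - A e) (A k - A e) > 0"
    using poly unfolding ccw_convex_polygon_def cr_def by blast
  define X where "X = A i"
  define P where "P = A i1"
  define Z where "Z = A i2"
  have E1: "\<And>k. k < n \<Longrightarrow> k \<noteq> i \<Longrightarrow> k \<noteq> i1 \<Longrightarrow> cr (P - X) (A k - X) > 0"
    using edge[OF i] unfolding P_def X_def i1_def by blast
  have E2: "\<And>k. k < n \<Longrightarrow> k \<noteq> i1 \<Longrightarrow> k \<noteq> i2 \<Longrightarrow> cr (Z - P) (A k - P) > 0"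
    using edge[OF ix(1)] unfolding P_def Z_def i2_def by blast
  have E1z: "cr (P - X) (Z - X) > 0" using E1[OF ix(2) ix(4) ix(5)] unfolding Z_def .
  have E2x: "cr (Z - P) (X - P) > 0" using E2[OF i ix(3)[symmetric]] ix(4) unfolding X_def by auto
  have XP: "X \<noteq> P" using E1z by (auto simp: cr_alt)
  have PZ: "P \<noteq> Z" using E2x by (auto simp: cr_alt)
  have Xd: "cmod X < 1" "cmod P < 1" "cmod Z < 1" using inD i ix unfolding X_def P_def Z_def by auto
  have ui: "u i = line_circle_near X P" using u_def i unfolding X_def P_def i1_def by auto
  have ui1: "u i1 = line_circle_near P Z" using u_def ix(1) unfolding P_def Z_def i2_def by auto
  obtain s where s: "s > 1" "u i = P + of_real s * (X - P)" and uin: "cmod (u i) = 1"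
    using near_point[OF Xd(1) Xd(2) XP] ui by auto
  obtain s' where s': "s' > 1" "u i1 = Z + of_real s' * (P - Z)" and u1n: "cmod (u i1) = 1"
    using near_point[OF Xd(2) Xd(3) PZ] ui1 by auto
  show "cmod (u i) = 1" by fact
  show "u i \<noteq> u (Suc i mod n)"
  proof
    assume "u i = u (Suc i mod n)"
    then have eq: "u i = u i1" unfolding i1_def .
    have "cr (P - X) (Z - X) * (s' - 1) = 0"
    proof -
      have "of_real s * (X - P) = of_real (s' - 1) * (P - Z)" using eq s(2) s'(2) by (simp add: algebra_simps)
      then have "cr (of_real s * (X - P)) (P - X) = cr (of_real (s' - 1) * (P - Z)) (P - X)" by simp
      then show ?thesis by (simp add: cr_alt algebra_simps)
    qed
    then show False using E1z s' by simp
  qed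
  have allk: "cr (A i - u i) (A k - u i) \<ge> 0" if k: "k < n" for k
  proof -
    have e: "cr (A i - u i) (A k - u i) = (s - 1) * cr (P - X) (A k - X)"
      unfolding s(2) X_def[symmetric] by (simp add: cr_alt algebra_simps)
    have "cr (P - X) (A k - X) \<ge> 0"
      using E1[OF k] by (cases "k = i1"; cases "k = i") (auto simp: P_def X_def cr_alt less_imp_le)
    then show ?thesis unfolding e using s(1) by simp
  qed
  show "psi_set (convex hull (A ` {..<n})) (u i) = mob (A i) (u i)"
    by (rule psi_set_vertex[OF refl inD uin i]) (use allk in blast)
qed

lemma pred_idx:
  fixes n i :: nat
  assumes "0 < n" "i < n"
  shows "(i + n - 1) mod n < n" "Suc ((i + n - 1) mod n) mod n = i"
proof -
  show "(i + n - 1) mod n < n" using assms by simp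
  show "Suc ((i + n - 1) mod n) mod n = i"
  proof (cases i)
    case 0
    then show ?thesis using assms by (simp add: mod_Suc)
  next
    case (Suc j)
    then have "(i + n - 1) mod n = j" using assms
      by (metis add_Suc diff_Suc_1 mod_add_self2 mod_less Suc_lessD)
    then show ?thesis using Suc assms by simp
  qed
qed



lemma arc_coI:
  assumes "circ_proj a = w1" "circ_proj b = w2" "a < b" "b \<le> a + 1" "a \<le> t" "t < b"
  shows "circ_proj t \<in> arc_co w1 w2"
  unfolding arc_co_def using assms by blast

theorem proposition2p4:
  fixes n :: nat and A :: "nat \<Rightarrow> complex" and u :: "nat \<Rightarrow> complex"
    and B :: "complex set"
  assumes poly: "ccw_convex_polygon n A"
    and inD: "\<forall>i<n. cmod (A i) < 1"
    and B_def: "B = convex hull (A ` {..<n})"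
    and u_def: "\<forall>i<n. u i = line_circle_near (A i) (A (Suc i mod n))"
    and i: "i < n"
  shows "(\<forall>v \<in> arc_co (u i) (u (Suc i mod n)).
            psi_set B v = psi_pt (A (Suc i mod n)) v)
       \<and> (\<forall>v \<in> arc_oo (u i) (u (Suc i mod n)). \<forall>x. circ_proj x = v \<longrightarrow>
            (circle_lift (psi_set B) has_real_derivative
               cmod (A (Suc i mod n) - psi_pt (A (Suc i mod n)) v) / cmod (v - A (Suc i mod n)))
            (at x))
       \<and> (\<forall>x. circ_proj x = u i \<longrightarrow>
            (circle_lift (psi_set B) has_real_derivative
               cmod (A (Suc i mod n) - psi_pt (A (Suc i mod n)) (u i)) / cmod (u i - A (Suc i mod n)))
            (at x within {x..})
          \<and> (circle_lift (psi_set B) has_real_derivative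
               cmod (A i - psi_pt (A i) (u i)) / cmod (u i - A i))
            (at x within {..x}))"
proof -
  define i1 where "i1 = Suc i mod n"
  have n3: "3 \<le> n" using poly unfolding ccw_convex_polygon_def by simp
  have n0: "0 < n" using n3 by simp
  have i1n: "i1 < n" unfolding i1_def using n0 by simp
  define P where "P = A i1"
  have Pd: "cmod P < 1" using inD i1n unfolding P_def by auto
  have Ad: "cmod (A i) < 1" using inD i by auto
  have P1: "\<And>v. v \<in> arc_co (u i) (u i1) \<Longrightarrow> psi_set B v = mob P v"
    unfolding P_def i1_def by (rule part1[OF poly inD B_def u_def i])
  have vn_co: "cmod v = 1" if "v \<in> arc_co (u i) (u i1)" for v
    using that unfolding arc_co_def by auto
  have part_1: "\<forall>v \<in> arc_co (u i) (u i1). psi_set B v = psi_pt P v"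
    using P1 psi_pt_eq[OF _ Pd] vn_co by auto
  have sph: "cmod (psi_set B z) = 1" if zz: "cmod z = 1" for z
  proof -
    obtain j where j: "j < n" "\<forall>k<n. cr (A j - z) (A k - z) \<ge> 0"
      using vertex_exists[OF n0 inD zz] by blast
    have "psi_set B z = mob (A j) z" by (rule psi_set_vertex[OF B_def inD zz j(1) j(2)])
    then show ?thesis using mob_props(3)[OF zz, of "A j"] inD j by auto
  qed
  have cont: "continuous_on (sphere 0 1) (psi_set B)" by (rule psi_set_cont[OF B_def inD n0])
  define L where "L = circle_lift (psi_set B)"
  note Lp = circle_lift_props[OF cont sph, folded L_def]
  define h where "h t = psi_set B (circ_proj t)" for t
  have Lp2: "\<And>t. circ_proj (L t) = h t" unfolding h_def by (rule Lp(2))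
  have part_2: "\<forall>v \<in> arc_oo (u i) (u i1). \<forall>x. circ_proj x = v \<longrightarrow>
      (L has_real_derivative cmod (P - psi_pt P v) / cmod (v - P)) (at x)"
  proof (intro ballI allI impI)
    fix v x assume vin: "v \<in> arc_oo (u i) (u i1)" and xv: "circ_proj x = v"
    from vin obtain y a b where ab: "v = circ_proj y" "circ_proj a = u i" "circ_proj b = u i1"
      "a < b" "b \<le> a + 1" "a < y" "y < b"
      unfolding arc_oo_def by blast
    from xv ab(1) obtain k :: int where k: "x = y + k" using circ_proj_eq_iff by metis
    have vn: "cmod v = 1" using ab by simp
    define S where "S = {a + k <..< b + k}"
    have hS: "h t = mob P (circ_proj t)" if "t \<in> S" for t
    proof -
      have "circ_proj t = circ_proj (t - k)" unfolding circ_proj_eq_iff by (intro exI[of _ k]) simp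
      moreover have "circ_proj (t - k) \<in> arc_co (u i) (u i1)"
        by (rule arc_coI[OF ab(2) ab(3) ab(4) ab(5)]) (use that S_def in auto)
      ultimately show ?thesis unfolding h_def using P1 by simp
    qed
    have xS: "x \<in> S" unfolding S_def k using ab by simp
    have hd: "(h has_vector_derivative (2 * pi * \<i> * circ_proj x) * ((of_real ((cmod P)^2) - 1) / (1 - cnj P * circ_proj x)^2)) (at x)"
      by (rule has_vector_derivative_transform_within_open[OF mob_circ_deriv[OF Pd] _ xS])
        (use hS S_def in auto)
    have hx: "h x = mob P v" using hS[OF xS] xv by simp
    from lift_deriv[OF Lp(1) Lp2 hd] have "(L has_real_derivative Im ((2 * pi * \<i> * v) * ((of_real ((cmod P)^2) - 1) / (1 - cnj P * v)^2) / mob P v) / (2 * pi)) (at x)"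
      using xv hx by simp
    then show "(L has_real_derivative cmod (P - psi_pt P v) / cmod (v - P)) (at x)"
      using mob_deriv_value[OF vn Pd] psi_pt_eq[OF vn Pd] by simp
  qed
  have uin: "cmod (u i) = 1" and une: "u i \<noteq> u i1" and uvert: "psi_set B (u i) = mob (A i) (u i)"
    using poly_basic[OF poly inD u_def i] B_def unfolding i1_def by auto
  have part_3: "\<forall>x. circ_proj x = u i \<longrightarrow>
      (L has_real_derivative cmod (P - psi_pt P (u i)) / cmod (u i - P)) (at x within {x..})
    \<and> (L has_real_derivative cmod (A i - psi_pt (A i) (u i)) / cmod (u i - A i)) (at x within {..x})"
  proof (intro allI impI conjI)
    fix x assume xu: "circ_proj x = u i"
    have u1n: "cmod (u i1) = 1" using poly_basic(1)[OF poly inD u_def i1n] .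
    obtain b where b: "circ_proj b = u i1" "x \<le> b" "b < x + 1" using lift_window[OF u1n] by blast
    have bx: "x < b" using b xu une by (cases "b = x") auto
    have hS: "h t = mob P (circ_proj t)" if "t \<in> {x..}" "dist t x < b - x" for t
    proof -
      have "circ_proj t \<in> arc_co (u i) (u i1)"
        by (rule arc_coI[OF xu b(1) bx]) (use b that in \<open>auto simp: dist_real_def\<close>)
      then show ?thesis unfolding h_def using P1 by simp
    qed
    have hd: "(h has_vector_derivative (2 * pi * \<i> * circ_proj x) * ((of_real ((cmod P)^2) - 1) / (1 - cnj P * circ_proj x)^2)) (at x within {x..})"
      by (rule has_vector_derivative_transform_within[OF mob_circ_deriv[OF Pd], of "b - x"]) (use hS bx in auto)
    have hx: "h x = mob P (u i)" using hS[of x] bx xu by simp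
    from lift_deriv[OF Lp(1) Lp2 hd] have "(L has_real_derivative Im ((2 * pi * \<i> * u i) * ((of_real ((cmod P)^2) - 1) / (1 - cnj P * u i)^2) / mob P (u i)) / (2 * pi)) (at x within {x..})"
      using xu hx by simp
    then show "(L has_real_derivative cmod (P - psi_pt P (u i)) / cmod (u i - P)) (at x within {x..})"
      using mob_deriv_value[OF uin Pd] psi_pt_eq[OF uin Pd] by simp
  next
    fix x assume xu: "circ_proj x = u i"
    define i' where "i' = (i + n - 1) mod n"
    have i'n: "i' < n" and si': "Suc i' mod n = i" using pred_idx[OF n0 i] unfolding i'_def by auto
    have u'n: "cmod (u i') = 1" and une': "u i' \<noteq> u i"
      using poly_basic[OF poly inD u_def i'n] si' by auto
    obtain a where a: "circ_proj a = u i'" "x - 1 \<le> a" "a < x - 1 + 1" using lift_window[OF u'n] by blast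
    have ax: "x - 1 < a"
    proof (rule ccontr)
      assume "\<not> x - 1 < a"
      then have "a = x - 1" using a by simp
      then have "circ_proj a = circ_proj x" unfolding circ_proj_eq_iff by (intro exI[of _ "-1"]) simp
      then show False using a xu une' by simp
    qed
    have P1': "psi_set B v = mob (A i) v" if "v \<in> arc_co (u i') (u i)" for v
      using part1[OF poly inD B_def u_def i'n, of v] that si' by simp
    have hS: "h t = mob (A i) (circ_proj t)" if "t \<in> {..x}" "dist t x < x - a" for t
    proof (cases "t = x")
      case True
      then show ?thesis unfolding h_def using xu uvert by simp
    next
      case False
      have "circ_proj t \<in> arc_co (u i') (u i)"
        by (rule arc_coI[OF a(1) xu]) (use a ax that False in \<open>auto simp: dist_real_def\<close>)
      then show ?thesis unfolding h_def using P1' by simp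
    qed
    have hd: "(h has_vector_derivative (2 * pi * \<i> * circ_proj x) * ((of_real ((cmod (A i))^2) - 1) / (1 - cnj (A i) * circ_proj x)^2)) (at x within {..x})"
      by (rule has_vector_derivative_transform_within[OF mob_circ_deriv[OF Ad], of "x - a"]) (use hS a in auto)
    have hx: "h x = mob (A i) (u i)" using hS[of x] a xu by simp
    from lift_deriv[OF Lp(1) Lp2 hd] have "(L has_real_derivative Im ((2 * pi * \<i> * u i) * ((of_real ((cmod (A i))^2) - 1) / (1 - cnj (A i) * u i)^2) / mob (A i) (u i)) / (2 * pi)) (at x within {..x})"
      using xu hx by simp
    then show "(L has_real_derivative cmod (A i - psi_pt (A i) (u i)) / cmod (u i - A i)) (at x within {..x})"
      using mob_deriv_value[OF uin Ad] psi_pt_eq[OF uin Ad] by simp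
  qed
  show ?thesis using part_1 part_2 part_3 unfolding L_def P_def i1_def by blast
qed


end
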